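(* Consider the distributed peeling protocol described in the context, run in the synchronous phase model described in the context. Then: (i) for $k$-core mining (threshold $k(v)=k$ for all $v$) on a graph $G=(V,E)$ with $k\le |V|$, the protocol converges in no more than $|V|-k$ phases; (ii) for $(k_1,k_2)$-core mining (threshold $k(v)=k_i$ for $v\in V_i$) on a bipartite graph $G=(V_1,V_2,E)$, it converges in no more than $(|V_1|-k_2)+(|V_2|-k_1)+1$ phases; (iii) for $(k_1,\ldots,k_p)$-core mining (threshold $k(v)=k_i$ for $v\in V_i$) on a $p$-partite graph $G=(V_1,\ldots,V_p,E)$ with $k_i\le |V_i|$ for all $1\le i\le p$, it converges in no more than $\sum_{i=1}^p |V_i| - \min_{1\le i\le p} k_i$ phases.
   Context: All graphs are finite simple undirected. A $p$-partite graph $G=(V_1,\ldots,V_p,E)$ has vertex set partitioned into disjoint sets $V_1,\ldots,V_p$ with no edges inside any $V_i$ (bipartite means $p=2$). Distributed peeling protocol with thresholds $k(v)$: each node $v$ keeps a counter $degree$, initialized to $\deg_G(v)$, and a status, initially active. Initially, if $degree<k(v)$, node $v$ sends an "off" message to each of its neighbors and becomes inactive. An active node, upon receiving a message, sets $degree=degree-1$; if then $degree<k(v)$, it sends an "off" message to each of its neighbors and becomes inactive. An inactive node remains inactive and ignores all incoming messages. Synchronous phase model: nodes operate in synchronized phases; in each phase, every node receives all messages sent by other nodes in the previous phase and, if applicable, sends off-messages to all its neighbors. The protocol converges at the phase after which no further node becomes inactive and no messages are sent. *)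

theory Defs
  imports Main
begin

definition simple_graph :: "'a set \<Rightarrow> ('a \<Rightarrow> 'a \<Rightarrow> bool) \<Rightarrow> bool" where
  "simple_graph V E \<longleftrightarrow> finite V \<and> (\<forall>u v. E u v \<longrightarrow> u \<in> V \<and> v \<in> V)
     \<and> (\<forall>u v. E u v \<longrightarrow> E v u) \<and> (\<forall>v. \<not> E v v)"

definition nbrs :: "'a set \<Rightarrow> ('a \<Rightarrow> 'a \<Rightarrow> bool) \<Rightarrow> 'a \<Rightarrow> 'a set" where
  "nbrs V E v = {u \<in> V. E v u}"

definition gdeg :: "'a set \<Rightarrow> ('a \<Rightarrow> 'a \<Rightarrow> bool) \<Rightarrow> 'a \<Rightarrow> nat" where
  "gdeg V E v = card (nbrs V E v)"

definition p_partite :: "'a set \<Rightarrow> ('a \<Rightarrow> 'a \<Rightarrow> bool) \<Rightarrow> nat \<Rightarrow> (nat \<Rightarrow> 'a set) \<Rightarrow> bool" where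
  "p_partite V E p P \<longleftrightarrow> simple_graph V E
     \<and> (\<Union>i\<in>{1..p}. P i) = V
     \<and> (\<forall>i\<in>{1..p}. \<forall>j\<in>{1..p}. i \<noteq> j \<longrightarrow> P i \<inter> P j = {})
     \<and> (\<forall>i\<in>{1..p}. \<forall>u\<in>P i. \<forall>v\<in>P i. \<not> E u v)"

definition bipartite :: "'a set \<Rightarrow> ('a \<Rightarrow> 'a \<Rightarrow> bool) \<Rightarrow> 'a set \<Rightarrow> 'a set \<Rightarrow> bool" where
  "bipartite V E V1 V2 \<longleftrightarrow> simple_graph V E \<and> V1 \<union> V2 = V \<and> V1 \<inter> V2 = {}
     \<and> (\<forall>u\<in>V1. \<forall>v\<in>V1. \<not> E u v) \<and> (\<forall>u\<in>V2. \<forall>v\<in>V2. \<not> E u v)"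

text \<open>Synchronous peeling: off V E k t is the set of inactive nodes at the end of
  phase t.  Phase 0 is the initial step (nodes with degree < k(v) switch off).
  In phase t+1 every still active node v has received exactly one off-message from
  each neighbour that became inactive in phases 0..t, so its counter equals
  deg v - |N(v) \<inter> off t|; if that is < k v it becomes inactive.\<close>
fun off :: "'a set \<Rightarrow> ('a \<Rightarrow> 'a \<Rightarrow> bool) \<Rightarrow> ('a \<Rightarrow> nat) \<Rightarrow> nat \<Rightarrow> 'a set" where
  "off V E k 0 = {v \<in> V. gdeg V E v < k v}"
| "off V E k (Suc t) = off V E k t \<union>
     {v \<in> V - off V E k t. gdeg V E v - card (nbrs V E v \<inter> off V E k t) < k v}"

text \<open>The protocol has converged by phase T: after phase T no further node becomes
  inactive (hence no further messages are sent).\<close>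
definition converges_within :: "'a set \<Rightarrow> ('a \<Rightarrow> 'a \<Rightarrow> bool) \<Rightarrow> ('a \<Rightarrow> nat) \<Rightarrow> nat \<Rightarrow> bool" where
  "converges_within V E k T \<longleftrightarrow> (\<forall>t\<ge>T. off V E k t = off V E k T)"

end

theory Submission
  imports Defs
begin

fun Off :: "'a set \<Rightarrow> ('a \<Rightarrow> 'a \<Rightarrow> bool) \<Rightarrow> ('a \<Rightarrow> nat) \<Rightarrow> nat \<Rightarrow> 'a set" where
  "Off V E k 0 = {}"
| "Off V E k (Suc t) = off V E k t"

declare Off.simps(2)[simp del]

lemma Off_step: "Off V E k (Suc n) = Off V E k n \<union>
   {v \<in> V - Off V E k n. gdeg V E v - card (nbrs V E v \<inter> Off V E k n) < k v}"
  by (cases n) (auto simp: Off.simps(2))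

lemma Off_mono: "Off V E k n \<subseteq> Off V E k (Suc n)"
  using Off_step[of V E k n] by blast

lemma Off_sub: "Off V E k n \<subseteq> V"
proof (induction n)
  case 0 then show ?case by simp
next
  case (Suc n) then show ?case using Off_step[of V E k n] by blast
qed

lemma Off_stable: "Off V E k (Suc n) = Off V E k n \<Longrightarrow> Off V E k (n + j) = Off V E k n"
proof (induction j)
  case 0 then show ?case by simp
next
  case (Suc j)
  then have "Off V E k (Suc (n + j)) = Off V E k (n+j)"
    using Off_step[of V E k "n+j"] Off_step[of V E k n] by simp
  then show ?case using Suc by simp
qed

lemma Off_ne_prev: "Off V E k (Suc n) \<noteq> Off V E k n \<Longrightarrow> Off V E k n \<noteq> Off V E k m \<or> m \<ge> n"
proof (rule ccontr)
  assume a: "Off V E k (Suc n) \<noteq> Off V E k n" "\<not> (Off V E k n \<noteq> Off V E k m \<or> m \<ge> n)"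
  then have "m < n" "Off V E k n = Off V E k m" by auto
  have mono: "Off V E k m \<subseteq> Off V E k (Suc m)" by (rule Off_mono)
  have "Off V E k (Suc m) \<subseteq> Off V E k n"
  proof -
    have "\<And>j. Off V E k (Suc m) \<subseteq> Off V E k (Suc m + j)"
    proof -
      fix j show "Off V E k (Suc m) \<subseteq> Off V E k (Suc m + j)"
        by (induction j) (use Off_mono in fastforce)+
    qed
    from this[of "n - Suc m"] show ?thesis using \<open>m < n\<close> by simp
  qed
  then have "Off V E k (Suc m) = Off V E k m" using mono \<open>Off V E k n = Off V E k m\<close> by blast
  from Off_stable[OF this, of "Suc (n - m)"] Off_stable[OF this, of "n - m"] \<open>m < n\<close>
  have "Off V E k (Suc n) = Off V E k n" by simp
  with a show False by simp
qed

lemma Off_card: assumes fin: "finite V" shows "Off V E k (Suc n) \<noteq> Off V E k n \<Longrightarrow> n \<le> card (Off V E k n)"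
proof (induction n)
  case 0 then show ?case by simp
next
  case (Suc n)
  have "Off V E k (Suc n) \<noteq> Off V E k n" using Off_ne_prev[OF Suc.prems, of n] by simp
  with Suc.IH have "n \<le> card (Off V E k n)" by simp
  moreover have "Off V E k n \<subset> Off V E k (Suc n)"
    using Off_mono[of V E k n] \<open>Off V E k (Suc n) \<noteq> Off V E k n\<close> by blast
  moreover have "finite (Off V E k (Suc n))" using Off_sub[of V E k "Suc n"] fin by (rule finite_subset)
  ultimately have "card (Off V E k n) < card (Off V E k (Suc n))" by (simp add: psubset_card_mono)
  with \<open>n \<le> card (Off V E k n)\<close> show ?case by simp
qed

lemma card_nb: "finite V \<Longrightarrow> gdeg V E v - card (nbrs V E v \<inter> X) = card (nbrs V E v - X)"
  unfolding gdeg_def nbrs_def by (subst card_Diff_subset_Int) auto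

lemma key:
  assumes fin: "finite V" and v: "v \<in> Off V E k (Suc (Suc n)) - Off V E k (Suc n)"
  shows "k v \<le> card (nbrs V E v - Off V E k n)"
    "card (nbrs V E v - Off V E k (Suc n)) < k v" "v \<in> V"
proof -
  from v have "v \<notin> Off V E k (Suc n)" by simp
  then have "v \<notin> Off V E k n \<and> \<not> (gdeg V E v - card (nbrs V E v \<inter> Off V E k n) < k v) \<or> v \<notin> V"
    using Off_step[of V E k n] by blast
  moreover from v have "v \<in> V" "gdeg V E v - card (nbrs V E v \<inter> Off V E k (Suc n)) < k v"
    using Off_step[of V E k "Suc n"] by auto
  ultimately show "k v \<le> card (nbrs V E v - Off V E k n)"
    "card (nbrs V E v - Off V E k (Suc n)) < k v" "v \<in> V"
    using card_nb[OF fin] by auto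
qed

lemma conv_of: "Off V E k (Suc (Suc T)) = Off V E k (Suc T) \<Longrightarrow> converges_within V E k T"
  unfolding converges_within_def
proof (intro allI impI)
  fix t assume a: "Off V E k (Suc (Suc T)) = Off V E k (Suc T)" "T \<le> t"
  from Off_stable[OF a(1), of "t - T"] a(2) show "off V E k t = off V E k T"
    by (metis Off.simps(2) Suc_diff_le add_Suc le_add_diff_inverse)
qed

lemma generic:
  assumes g: "simple_graph V E" and th: "\<forall>v\<in>V. m \<le> thr v" and mV: "m \<le> card V"
  shows "converges_within V E thr (card V - m)"
proof (rule conv_of, rule ccontr)
  let ?O = "Off V E thr"
  define n where "n = card V - m"
  have fin: "finite V" using g simple_graph_def by blast
  assume ne: "?O (Suc (Suc (card V - m))) \<noteq> ?O (Suc (card V - m))"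
  then obtain v where v: "v \<in> ?O (Suc (Suc n)) - ?O (Suc n)"
    using Off_mono[of V E thr "Suc n"] n_def by blast
  note K = key[OF fin v]
  have "?O (Suc n) \<noteq> ?O n" using Off_ne_prev[of V E thr "Suc n" n] ne n_def by auto
  then have c: "n \<le> card (?O n)" using Off_card[OF fin] by blast
  have vn: "v \<notin> ?O n" using v Off_mono[of V E thr n] by blast
  have sub: "?O n \<union> {v} \<union> (nbrs V E v - ?O n) \<subseteq> V"
    using Off_sub[of V E thr n] K(3) by (auto simp: nbrs_def)
  have vN: "v \<notin> nbrs V E v" using g by (auto simp: nbrs_def simple_graph_def)
  have fO: "finite (?O n)" using Off_sub[of V E thr n] fin by (rule finite_subset)
  have fN: "finite (nbrs V E v)" using fin by (auto simp: nbrs_def)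
  have "card (?O n \<union> {v} \<union> (nbrs V E v - ?O n)) = card (?O n) + 1 + card (nbrs V E v - ?O n)"
    using vn vN fO fN by (subst card_Un_disjoint) auto
  then have "card (?O n) + 1 + card (nbrs V E v - ?O n) \<le> card V"
    using card_mono[OF fin sub] by simp
  moreover have "m \<le> card (nbrs V E v - ?O n)" using K(1) th K(3) by fastforce
  ultimately show False using c mV n_def by linarith
qed

lemma card2: "finite S \<Longrightarrow> A \<subseteq> S \<Longrightarrow> B \<subseteq> S \<Longrightarrow> A \<inter> B = {} \<Longrightarrow> card A + card B \<le> card S"
  by (metis card_Un_disjoint card_mono finite_subset le_sup_iff)

lemma card3: "finite S \<Longrightarrow> A \<subseteq> S \<Longrightarrow> B \<subseteq> S \<Longrightarrow> C \<subseteq> S \<Longrightarrow> A \<inter> B = {} \<Longrightarrow> A \<inter> C = {}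
   \<Longrightarrow> B \<inter> C = {} \<Longrightarrow> card A + card B + card C \<le> card S"
proof -
  assume a: "finite S" "A \<subseteq> S" "B \<subseteq> S" "C \<subseteq> S" "A \<inter> B = {}" "A \<inter> C = {}" "B \<inter> C = {}"
  have "card A + card B = card (A \<union> B)" using a by (metis card_Un_disjoint finite_subset)
  moreover have "card (A \<union> B) + card C \<le> card S" using a by (intro card2) auto
  ultimately show ?thesis by simp
qed

lemma alive: assumes "finite V" "y \<in> V" "y \<notin> Off V E k (Suc m)"
  shows "k y \<le> card (nbrs V E y - Off V E k m)"
proof -
  have "y \<notin> Off V E k m" using assms(3) Off_mono[of V E k m] by blast
  with assms Off_step[of V E k m] have "\<not> gdeg V E y - card (nbrs V E y \<inter> Off V E k m) < k y" by blast
  then show ?thesis using card_nb[OF assms(1)] by simp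
qed

lemma dying: assumes "finite V" "w \<in> Off V E k (Suc m) - Off V E k m"
  shows "card (nbrs V E w - Off V E k m) < k w"
  using assms Off_step[of V E k m] card_nb[OF assms(1)] by auto

lemma bip_aux:
  assumes g: "simple_graph V E" and cov: "V1 \<union> V2 = V" and dis: "V1 \<inter> V2 = {}"
    and e1: "\<forall>u\<in>V1. \<forall>v\<in>V1. \<not> E u v" and e2: "\<forall>u\<in>V2. \<forall>v\<in>V2. \<not> E u v"
    and t1: "\<forall>v\<in>V1. thr v = k1" and t2: "\<forall>v\<in>V2. thr v = k2"
    and vV: "v \<in> V1" and v: "v \<in> Off V E thr (Suc (Suc (Suc n))) - Off V E thr (Suc (Suc n))"
  shows "Suc n \<le> (card V1 - k2) + (card V2 - k1)"
proof -
  let ?O = "Off V E thr"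
  let ?N = "nbrs V E"
  have fin: "finite V" using g simple_graph_def by blast
  have sym: "\<And>a b. E a b \<Longrightarrow> E b a" using g unfolding simple_graph_def by simp
  have fV1: "finite V1" "finite V2" using fin cov by auto
  note K = key[OF fin v]
  have "thr v = k1" using t1 vV by simp
  have "?N v - ?O (Suc (Suc n)) \<subset> ?N v - ?O (Suc n)"
  proof -
    have "?N v - ?O (Suc (Suc n)) \<subseteq> ?N v - ?O (Suc n)" using Off_mono[of V E thr "Suc n"] by blast
    moreover have "?N v - ?O (Suc (Suc n)) \<noteq> ?N v - ?O (Suc n)" using K(1,2) by auto
    ultimately show ?thesis by (rule psubsetI)
  qed
  then obtain u where uN: "u \<in> ?N v" and u: "u \<in> ?O (Suc (Suc n)) - ?O (Suc n)" by blast
  have "u \<in> V2" using uN vV e1 cov by (auto simp: nbrs_def)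
  note K2 = key[OF fin u]
  have "thr u = k2" using t2 \<open>u \<in> V2\<close> by simp
  have NuV1: "?N u \<subseteq> V1" using \<open>u \<in> V2\<close> e2 cov by (auto simp: nbrs_def)
  have NvV2: "?N v \<subseteq> V2" using vV e1 cov by (auto simp: nbrs_def)
  have fO: "finite (?O n)" using Off_sub[of V E thr n] fin by (rule finite_subset)
  have OnV: "?O n \<subseteq> V" by (rule Off_sub)
  have mono1: "?O n \<subseteq> ?O (Suc n)" by (rule Off_mono)
  have C: "card (?O n) = card (?O n \<inter> V1) + card (?O n \<inter> V2)"
  proof -
    have e: "?O n \<inter> V1 \<union> ?O n \<inter> V2 = ?O n" using OnV cov by blast
    have "card (?O n \<inter> V1 \<union> ?O n \<inter> V2) = card (?O n \<inter> V1) + card (?O n \<inter> V2)"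
      using fO dis by (intro card_Un_disjoint) auto
    then show ?thesis unfolding e .
  qed
  have "?O (Suc (Suc n)) \<noteq> ?O (Suc n)" using u by blast
  then have "?O (Suc n) \<noteq> ?O n \<or> Suc n \<le> n" by (rule Off_ne_prev)
  then have ne: "?O (Suc n) \<noteq> ?O n" by simp
  then have D: "n \<le> card (?O n)" by (rule Off_card[OF fin])
  obtain w where w: "w \<in> ?O (Suc n) - ?O n" using ne mono1 by blast
  have wV: "w \<in> V" using w Off_sub[of V E thr "Suc n"] by blast
  have A1: "card (?O n \<inter> V1) + card (?N u - ?O n) \<le> card V1"
    using NuV1 by (intro card2[OF fV1(1)]) auto
  have B1: "card (?O n \<inter> V2) + card (?N v - ?O (Suc n)) \<le> card V2"
    using NvV2 mono1 by (intro card2[OF fV1(2)]) auto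
  show ?thesis
  proof (cases "w \<in> V2")
    case True
    have "card (?O n \<inter> V2) + card {w} + card (?N v - ?O (Suc n)) \<le> card V2"
      using NvV2 mono1 w True by (intro card3[OF fV1(2)]) auto
    with A1 C D K(1) K2(1) \<open>thr v = k1\<close> \<open>thr u = k2\<close> show ?thesis by simp
  next
    case False
    then have wV1: "w \<in> V1" using wV cov by blast
    show ?thesis
    proof (cases "k2 < card (V1 - ?O n)")
      case True
      have "card (?O n \<inter> V1) + card (V1 - ?O n) \<le> card V1"
        by (intro card2[OF fV1(1)]) auto
      with True B1 C D K(1) \<open>thr v = k1\<close> show ?thesis by simp
    next
      case False
      have sub: "?N v - ?O (Suc n) \<subseteq> ?N w - ?O n"
      proof
        fix y assume y: "y \<in> ?N v - ?O (Suc n)"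
        then have yV: "y \<in> V" "y \<in> V2" using NvV2 by (auto simp: nbrs_def)
        have "thr y \<le> card (?N y - ?O n)" using alive[OF fin yV(1)] y by blast
        then have ky: "k2 \<le> card (?N y - ?O n)" using t2 yV by simp
        have sy: "?N y - ?O n \<subseteq> V1 - ?O n" using yV e2 cov by (auto simp: nbrs_def)
        have "card (V1 - ?O n) \<le> card (?N y - ?O n)" using ky False by linarith
        from card_seteq[OF finite_Diff[OF fV1(1)] sy this]
        have "?N y - ?O n = V1 - ?O n" .
        then have "w \<in> ?N y" using w wV1 by blast
        then have "E w y" using sym by (auto simp: nbrs_def)
        then show "y \<in> ?N w - ?O n" using y yV mono1 by (auto simp: nbrs_def)
      qed
      have "card (?N v - ?O (Suc n)) \<le> card (?N w - ?O n)"
        using sub fin by (intro card_mono) (auto simp: nbrs_def)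
      moreover have "card (?N w - ?O n) < thr w" using dying[OF fin w] .
      moreover have "thr w = k1" using t1 wV1 by simp
      ultimately show ?thesis using K(1) \<open>thr v = k1\<close> by simp
    qed
  qed
qed

theorem lemma2:
  shows "(\<forall>(V::'a set) E (k::nat). simple_graph V E \<and> k \<le> card V
            \<longrightarrow> converges_within V E (\<lambda>_. k) (card V - k))
       \<and> (\<forall>(V::'a set) E V1 V2 (k1::nat) k2 thr. bipartite V E V1 V2
            \<and> (\<forall>v\<in>V1. thr v = k1) \<and> (\<forall>v\<in>V2. thr v = k2)
            \<longrightarrow> converges_within V E thr ((card V1 - k2) + (card V2 - k1) + 1))
       \<and> (\<forall>(V::'a set) E (p::nat) P (ks::nat \<Rightarrow> nat) thr. 1 \<le> p \<and> p_partite V E p P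
            \<and> (\<forall>i\<in>{1..p}. ks i \<le> card (P i))
            \<and> (\<forall>i\<in>{1..p}. \<forall>v\<in>P i. thr v = ks i)
            \<longrightarrow> converges_within V E thr ((\<Sum>i\<in>{1..p}. card (P i)) - Min (ks ` {1..p})))"
proof (intro conjI allI impI)
  fix V :: "'a set" and E and k :: nat
  assume "simple_graph V E \<and> k \<le> card V"
  then show "converges_within V E (\<lambda>_. k) (card V - k)" using generic[of V E k] by auto
next
  fix V :: "'a set" and E V1 V2 and k1 k2 :: nat and thr :: "'a \<Rightarrow> nat"
  assume a: "bipartite V E V1 V2 \<and> (\<forall>v\<in>V1. thr v = k1) \<and> (\<forall>v\<in>V2. thr v = k2)"
  have t1: "\<forall>v\<in>V1. thr v = k1" and t2: "\<forall>v\<in>V2. thr v = k2" using a by blast+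
  have bp: "simple_graph V E" "V1 \<union> V2 = V" "V1 \<inter> V2 = {}"
      "\<forall>u\<in>V1. \<forall>v\<in>V1. \<not> E u v" "\<forall>u\<in>V2. \<forall>v\<in>V2. \<not> E u v"
    using a unfolding bipartite_def by blast+
  have fin: "finite V" using bp(1) unfolding simple_graph_def by blast
  define n where "n = (card V1 - k2) + (card V2 - k1)"
  have Teq: "(card V1 - k2) + (card V2 - k1) + 1 = Suc n" unfolding n_def by simp
  show "converges_within V E thr ((card V1 - k2) + (card V2 - k1) + 1)"
    unfolding Teq
  proof (rule conv_of, rule ccontr)
    assume ne: "Off V E thr (Suc (Suc (Suc n))) \<noteq> Off V E thr (Suc (Suc n))"
    then obtain v where v: "v \<in> Off V E thr (Suc (Suc (Suc n))) - Off V E thr (Suc (Suc n))"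
      using Off_mono[of V E thr "Suc (Suc n)"] by blast
    have "v \<in> V" using key(3)[OF fin v] .
    then consider "v \<in> V1" | "v \<in> V2" using bp(2) by blast
    then show False
    proof cases
      case 1
      have "Suc n \<le> (card V1 - k2) + (card V2 - k1)"
        by (rule bip_aux[OF bp t1 t2 1 v])
      then show False unfolding n_def by simp
    next
      case 2
      have bp': "V2 \<union> V1 = V" "V2 \<inter> V1 = {}" using bp(2,3) by blast+
      have "Suc n \<le> (card V2 - k1) + (card V1 - k2)"
        by (rule bip_aux[OF bp(1) bp' bp(5) bp(4) t2 t1 2 v])
      then show False unfolding n_def by simp
    qed
  qed
next
  fix V :: "'a set" and E p P and ks :: "nat \<Rightarrow> nat" and thr :: "'a \<Rightarrow> nat"
  assume a: "1 \<le> p \<and> p_partite V E p P \<and> (\<forall>i\<in>{1..p}. ks i \<le> card (P i))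
            \<and> (\<forall>i\<in>{1..p}. \<forall>v\<in>P i. thr v = ks i)"
  have p1: "1 \<le> p" and pp: "p_partite V E p P" and kle: "\<forall>i\<in>{1..p}. ks i \<le> card (P i)"
    and tk: "\<forall>i\<in>{1..p}. \<forall>v\<in>P i. thr v = ks i" using a by blast+
  have g: "simple_graph V E" and cov: "(\<Union>i\<in>{1..p}. P i) = V"
    and dis: "\<forall>i\<in>{1..p}. \<forall>j\<in>{1..p}. i \<noteq> j \<longrightarrow> P i \<inter> P j = {}"
    using pp unfolding p_partite_def by blast+
  have fin: "finite V" using g unfolding simple_graph_def by blast
  have Psub: "\<And>i. i \<in> {1..p} \<Longrightarrow> P i \<subseteq> V" using cov by blast
  have fP: "\<forall>i\<in>{1..p}. finite (P i)" using Psub fin finite_subset by blast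
  have "card (\<Union>i\<in>{1..p}. P i) = (\<Sum>i\<in>{1..p}. card (P i))"
    using fP dis by (intro card_UN_disjoint) auto
  then have sumV: "(\<Sum>i\<in>{1..p}. card (P i)) = card V" unfolding cov by simp
  let ?m = "Min (ks ` {1..p})"
  have th: "\<forall>v\<in>V. ?m \<le> thr v"
  proof
    fix v assume "v \<in> V"
    then obtain i where i: "i \<in> {1..p}" "v \<in> P i" using cov by blast
    then have "thr v = ks i" using tk by blast
    moreover have "?m \<le> ks i" using i(1) by simp
    ultimately show "?m \<le> thr v" by simp
  qed
  have one: "1 \<in> {1..p}" using p1 by simp
  then have "?m \<le> ks 1" by simp
  also have "ks 1 \<le> card (P 1)" using kle one by blast
  also have "card (P 1) \<le> card V" using Psub[OF one] fin by (rule card_mono[rotated])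
  finally have "?m \<le> card V" .
  from generic[OF g th this] sumV
  show "converges_within V E thr ((\<Sum>i\<in>{1..p}. card (P i)) - ?m)" by simp
qed

end
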